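(* There exist instances of arbitrarily large size of scheduling a single job with a general DAG dependency graph such that the optimal makespan is $\Omega(\sqrt{\mu_j}(\Delta_j+T_j))$; that is, there is a constant $\kappa>0$ such that for arbitrarily large $\mu_j$ there is a single-job instance with $\mu_j$ coflows whose optimal makespan is at least $\kappa\sqrt{\mu_j}(\Delta_j+T_j)$.
   Context: Model. $m$ servers, each a sender and a receiver. A coflow is an $m\times m$ nonnegative integer matrix $(d_{sr})$ of unit packets from sender $s$ to receiver $r$. A job $j$ has $\mu_j$ coflows $\mathcal{D}^{(cj)}$ and a DAG $G_j$; edge $c_1\to c_2$ means no packet of $c_2$ is sent before all packets of $c_1$ are sent. Each slot, each sender sends at most one packet and each receiver receives at most one. The makespan of a feasible schedule is the end of its last used slot. Effective size of a coflow: $D=\max\{\max_s\sum_rd_{sr},\max_r\sum_sd_{sr}\}$. $\Delta_j$ is the effective size of $\sum_c\mathcal{D}^{(cj)}$; $T_j$ is the maximum over directed paths in $G_j$ of the sum of effective sizes of the coflows on the path. *)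

theory Defs
  imports Complex_Main
begin

text \<open>Servers are 0..m-1. A coflow is d :: nat => nat => nat (sender, receiver),
  only entries with s,r < m are meaningful. A job with mu coflows is
  D :: nat => nat => nat => nat (coflow index c < mu), with DAG E on {..<mu}.\<close>

definition eff_size :: "nat \<Rightarrow> (nat \<Rightarrow> nat \<Rightarrow> nat) \<Rightarrow> nat" where
  "eff_size m d = max (Max ({\<Sum>r<m. d s r | s. s < m} \<union> {0}))
                      (Max ({\<Sum>s<m. d s r | r. r < m} \<union> {0}))"

definition Delta :: "nat \<Rightarrow> nat \<Rightarrow> (nat \<Rightarrow> nat \<Rightarrow> nat \<Rightarrow> nat) \<Rightarrow> nat" where
  "Delta m mu D = eff_size m (\<lambda>s r. \<Sum>c<mu. D c s r)"

definition is_path :: "nat \<Rightarrow> (nat \<times> nat) set \<Rightarrow> nat list \<Rightarrow> bool" where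
  "is_path mu E p \<longleftrightarrow> p \<noteq> [] \<and> distinct p \<and> set p \<subseteq> {..<mu} \<and>
     (\<forall>i. Suc i < length p \<longrightarrow> (p ! i, p ! Suc i) \<in> E)"

definition T_len :: "nat \<Rightarrow> nat \<Rightarrow> (nat \<times> nat) set \<Rightarrow> (nat \<Rightarrow> nat \<Rightarrow> nat \<Rightarrow> nat) \<Rightarrow> nat" where
  "T_len m mu E D = Max ({\<Sum>c\<leftarrow>p. eff_size m (D c) | p. is_path mu E p} \<union> {0})"

definition valid_instance :: "nat \<Rightarrow> nat \<Rightarrow> (nat \<times> nat) set \<Rightarrow> (nat \<Rightarrow> nat \<Rightarrow> nat \<Rightarrow> nat) \<Rightarrow> bool" where
  "valid_instance m mu E D \<longleftrightarrow> E \<subseteq> {..<mu} \<times> {..<mu} \<and> acyclic E \<and>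
     (\<forall>c s r. (c \<ge> mu \<or> s \<ge> m \<or> r \<ge> m) \<longrightarrow> D c s r = 0) \<and>
     (\<forall>c<mu. eff_size m (D c) > 0)"

text \<open>A schedule x c s r t = number of packets of coflow c from s to r sent in slot t
  (slot t occupies the time interval [t, t+1)).\<close>
definition feasible :: "nat \<Rightarrow> nat \<Rightarrow> (nat \<times> nat) set \<Rightarrow> (nat \<Rightarrow> nat \<Rightarrow> nat \<Rightarrow> nat)
    \<Rightarrow> (nat \<Rightarrow> nat \<Rightarrow> nat \<Rightarrow> nat \<Rightarrow> nat) \<Rightarrow> bool" where
  "feasible m mu E D x \<longleftrightarrow>
     (\<exists>H. (\<forall>c s r t. t \<ge> H \<longrightarrow> x c s r t = 0) \<and>
          (\<forall>c<mu. \<forall>s<m. \<forall>r<m. (\<Sum>t<H. x c s r t) = D c s r)) \<and>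
     (\<forall>c s r t. (c \<ge> mu \<or> s \<ge> m \<or> r \<ge> m) \<longrightarrow> x c s r t = 0) \<and>
     (\<forall>t. \<forall>s<m. (\<Sum>c<mu. \<Sum>r<m. x c s r t) \<le> 1) \<and>
     (\<forall>t. \<forall>r<m. (\<Sum>c<mu. \<Sum>s<m. x c s r t) \<le> 1) \<and>
     (\<forall>(c1, c2) \<in> E. \<forall>s1 r1 t1 s2 r2 t2.
        x c1 s1 r1 t1 > 0 \<longrightarrow> x c2 s2 r2 t2 > 0 \<longrightarrow> t1 < t2)"

definition makespan :: "(nat \<Rightarrow> nat \<Rightarrow> nat \<Rightarrow> nat \<Rightarrow> nat) \<Rightarrow> nat" where
  "makespan x = Max ({Suc t | t. \<exists>c s r. x c s r t > 0} \<union> {0})"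

end

theory Submission
  imports Defs
begin

definition Dk :: "nat \<Rightarrow> nat \<Rightarrow> nat \<Rightarrow> nat \<Rightarrow> nat" where
  "Dk k c s r = (if c < k*k \<and> s = c div k \<and> r = c div k then 1 else 0)"

definition Ek :: "nat \<Rightarrow> (nat \<times> nat) set" where
  "Ek k = {(c1,c2). c1 < k*k \<and> c2 < k*k \<and> c1 div k < c2 div k}"

lemma eff_size_le:
  assumes "\<forall>s<m. (\<Sum>r<m. d s r) \<le> B" "\<forall>r<m. (\<Sum>s<m. d s r) \<le> B"
  shows "eff_size m d \<le> B"
proof -
  have e1: "{\<Sum>r<m. d s r | s. s < m} = (\<lambda>s. \<Sum>r<m. d s r) ` {..<m}" by auto
  have e2: "{\<Sum>s<m. d s r | r. r < m} = (\<lambda>r. \<Sum>s<m. d s r) ` {..<m}" by auto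
  show ?thesis unfolding eff_size_def e1 e2 using assms
    by (auto intro!: Max.boundedI)
qed

lemma eff_size_ge:
  assumes "s < m" "r < m" "d s r \<ge> 1"
  shows "eff_size m d \<ge> 1"
proof -
  have e1: "{\<Sum>r<m. d s r | s. s < m} = (\<lambda>s. \<Sum>r<m. d s r) ` {..<m}" by auto
  have "d s r \<le> (\<Sum>r<m. d s r)" using assms(2) by (intro member_le_sum) auto
  moreover have "(\<Sum>r<m. d s r) \<le> Max ({\<Sum>r<m. d s r | s. s < m} \<union> {0})"
    unfolding e1 using assms(1) by (intro Max_ge) auto
  ultimately show ?thesis using assms(3) unfolding eff_size_def by linarith
qed

lemma double_delta:
  assumes "(a::nat) < k"
  shows "(\<Sum>s<k. \<Sum>r<k. if s = a \<and> r = a then (1::nat) else 0) = 1"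
proof -
  have "(\<Sum>s<k. \<Sum>r<k. if s = a \<and> r = a then (1::nat) else 0)
      = (\<Sum>s<k. if s = a then (\<Sum>r<k. if r = a then (1::nat) else 0) else 0)"
    by (intro sum.cong refl) auto
  then show ?thesis using assms by simp
qed

lemma sum_ind_le:
  assumes "finite A" "\<forall>r\<in>A. f r \<le> (if r = a then (1::nat) else 0)"
  shows "sum f A \<le> 1"
proof -
  have "sum f A \<le> (\<Sum>r\<in>A. if r = a then (1::nat) else 0)" using assms by (intro sum_mono) auto
  also have "\<dots> \<le> 1" using assms(1) by simp
  finally show ?thesis .
qed

lemma Dk_eff:
  assumes "c < k*k"
  shows "eff_size k (Dk k c) = 1"
proof -
  have k: "c div k < k" using assms by (simp add: less_mult_imp_div_less)
  have "eff_size k (Dk k c) \<le> 1"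
  proof (rule eff_size_le; intro allI impI)
    fix s show "(\<Sum>r<k. Dk k c s r) \<le> 1"
      by (rule sum_ind_le[where a="c div k"]) (auto simp: Dk_def)
  next
    fix r show "(\<Sum>s<k. Dk k c s r) \<le> 1"
      by (rule sum_ind_le[where a="c div k"]) (auto simp: Dk_def)
  qed
  moreover have "eff_size k (Dk k c) \<ge> 1"
    using k assms by (intro eff_size_ge[of "c div k" _ "c div k"]) (auto simp: Dk_def)
  ultimately show ?thesis by simp
qed

lemma Delta_le:
  assumes "k > 0"
  shows "Delta k (k*k) (Dk k) \<le> k"
proof -
  have row: "(\<Sum>r<k. \<Sum>c<k*k. Dk k c s r) \<le> k" if "s < k" for s
  proof -
    have "(\<Sum>r<k. \<Sum>c<k*k. Dk k c s r) = (\<Sum>c<k*k. \<Sum>r<k. Dk k c s r)" by (rule sum.swap)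
    also have "\<dots> = (\<Sum>c<k*k. if c div k = s then 1 else 0)"
      using that by (intro sum.cong) (auto simp: Dk_def)
    also have "\<dots> = card ({..<k*k} \<inter> {c. c div k = s})"
      by (simp add: sum.If_cases)
    also have "\<dots> \<le> card {s*k..<s*k+k}"
    proof (intro card_mono)
      show "{..<k*k} \<inter> {c. c div k = s} \<subseteq> {s * k..<s * k + k}"
      proof
        fix c assume "c \<in> {..<k*k} \<inter> {c. c div k = s}"
        then have "c = s*k + c mod k" by (metis IntD2 div_mult_mod_eq mem_Collect_eq)
        moreover have "c mod k < k" using assms by simp
        ultimately show "c \<in> {s * k..<s * k + k}" by (metis atLeastLessThan_iff le_add1 add_less_cancel_left)
      qed
    qed simp
    finally show ?thesis by simp
  qed
  have sym: "Dk k c s r = Dk k c r s" for c s r by (auto simp: Dk_def)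
  show ?thesis unfolding Delta_def
  proof (rule eff_size_le; intro allI impI)
    fix s assume "s < k"
    then show "(\<Sum>r<k. \<Sum>c<k*k. Dk k c s r) \<le> k" by (rule row)
  next
    fix r assume "r < k"
    have "(\<Sum>s<k. \<Sum>c<k*k. Dk k c s r) = (\<Sum>s<k. \<Sum>c<k*k. Dk k c r s)" by (simp add: sym)
    then show "(\<Sum>s<k. \<Sum>c<k*k. Dk k c s r) \<le> k" using row[OF \<open>r < k\<close>] by simp
  qed
qed

lemma path_len:
  assumes "is_path (k*k) (Ek k) p"
  shows "length p \<le> k"
proof -
  have step: "p ! 0 div k + j \<le> p ! j div k" if "j < length p" for j
    using that
  proof (induction j)
    case 0 then show ?case by simp
  next
    case (Suc j)
    then have "(p ! j, p ! Suc j) \<in> Ek k" using assms unfolding is_path_def by blast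
    then show ?case using Suc by (auto simp: Ek_def)
  qed
  have ne: "p \<noteq> []" using assms unfolding is_path_def by blast
  then have "length p - 1 < length p" by simp
  from step[OF this] have "length p - 1 \<le> p ! (length p - 1) div k" by simp
  moreover have mem: "p ! (length p - 1) \<in> set p" using ne by simp
  have "set p \<subseteq> {..<k*k}" using assms unfolding is_path_def by blast
  with mem have "p ! (length p - 1) < k*k" by auto
  then have "p ! (length p - 1) div k < k" by (simp add: less_mult_imp_div_less)
  ultimately show ?thesis by linarith
qed

lemma T_le:
  shows "T_len k (k*k) (Ek k) (Dk k) \<le> k"
proof -
  have sum_eq: "(\<Sum>c\<leftarrow>p. eff_size k (Dk k c)) = length p" if "is_path (k*k) (Ek k) p" for p
  proof -
    have "map (\<lambda>c. eff_size k (Dk k c)) p = map (\<lambda>c. 1) p"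
      using that unfolding is_path_def by (intro map_cong) (auto simp: Dk_eff)
    then have A: "\<forall>c\<in>set p. eff_size k (Dk k c) = 1"
      using that unfolding is_path_def by (auto simp: Dk_eff)
    then show ?thesis by (induction p) auto
  qed
  let ?S = "{\<Sum>c\<leftarrow>p. eff_size k (Dk k c) | p. is_path (k*k) (Ek k) p} \<union> {0}"
  have sub: "?S \<subseteq> {..k}" using sum_eq path_len by fastforce
  then have "finite ?S" by (rule finite_subset) simp
  then show ?thesis unfolding T_len_def using sub by (intro Max.boundedI) auto
qed

lemma valid: "k > 0 \<Longrightarrow> valid_instance k (k*k) (Ek k) (Dk k)"
proof -
  assume k: "k > 0"
  have "Ek k \<subseteq> inv_image less_than (\<lambda>c. c div k)" by (auto simp: Ek_def)
  then have "wf (Ek k)" by (rule wf_subset[rotated]) simp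
  then have "acyclic (Ek k)" by (rule wf_acyclic)
  moreover have "Ek k \<subseteq> {..<k*k} \<times> {..<k*k}" by (auto simp: Ek_def)
  moreover have "\<forall>c s r. (c \<ge> k*k \<or> s \<ge> k \<or> r \<ge> k) \<longrightarrow> Dk k c s r = 0"
    by (auto simp: Dk_def dest: less_mult_imp_div_less)
  ultimately show ?thesis unfolding valid_instance_def by (simp add: Dk_eff)
qed

lemma mk_lower:
  assumes k: "k > 0" and fe: "feasible k (k*k) (Ek k) (Dk k) x"
  shows "k*k \<le> makespan x"
proof -
  obtain H where H0: "\<forall>c s r t. t \<ge> H \<longrightarrow> x c s r t = 0"
    and Hs: "\<forall>c<k*k. \<forall>s<k. \<forall>r<k. (\<Sum>t<H. x c s r t) = Dk k c s r"
    using fe unfolding feasible_def by (elim conjE exE) (rule that; assumption)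
  have out: "\<And>c s r t. (c \<ge> k*k \<or> s \<ge> k \<or> r \<ge> k) \<Longrightarrow> x c s r t = 0"
    using fe unfolding feasible_def by blast
  have snd1: "\<And>t s. s < k \<Longrightarrow> (\<Sum>c<k*k. \<Sum>r<k. x c s r t) \<le> 1"
    using fe unfolding feasible_def by blast
  have ord: "\<And>c1 c2 s1 r1 t1 s2 r2 t2. (c1, c2) \<in> Ek k \<Longrightarrow> x c1 s1 r1 t1 > 0 \<Longrightarrow> x c2 s2 r2 t2 > 0 \<Longrightarrow> t1 < t2"
    using fe unfolding feasible_def by blast
  have xle: "x c s r t \<le> Dk k c s r" if "c < k*k" "s < k" "r < k" for c s r t
  proof (cases "t < H")
    case True
    then have "x c s r t \<le> (\<Sum>t<H. x c s r t)" by (intro member_le_sum) auto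
    then show ?thesis using Hs that by auto
  next
    case False then show ?thesis using H0 by simp
  qed
  have xpos: "c < k*k \<and> s = c div k \<and> r = c div k" if "x c s r t > 0" for c s r t
  proof -
    have "c < k*k \<and> s < k \<and> r < k" using out that by (metis not_le less_irrefl)
    then show ?thesis using xle[of c s r t] that by (auto simp: Dk_def split: if_splits)
  qed
  have same: "c div k = c' div k" if "x c s r t > 0" "x c' s' r' t > 0" for c s r c' s' r' t
  proof (rule ccontr)
    assume "c div k \<noteq> c' div k"
    then have "(c, c') \<in> Ek k \<or> (c', c) \<in> Ek k" using xpos that by (auto simp: Ek_def)
    then show False using ord that by blast
  qed
  define g where "g t = (\<Sum>c<k*k. \<Sum>s<k. \<Sum>r<k. x c s r t)" for t
  have gle: "g t \<le> 1" for t
  proof (cases "\<exists>c s r. x c s r t > 0")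
    case False
    then have "g t = 0" unfolding g_def by simp
    then show ?thesis by simp
  next
    case True
    then obtain c0 s0 r0 where p0: "x c0 s0 r0 t > 0" by blast
    define i where "i = c0 div k"
    have ik: "i < k" using xpos[OF p0] unfolding i_def by (simp add: less_mult_imp_div_less)
    have inner: "(\<Sum>s<k. \<Sum>r<k. x c s r t) = (\<Sum>r<k. x c i r t)" for c
    proof -
      have "(\<Sum>s<k. \<Sum>r<k. x c s r t) = (\<Sum>s<k. if s = i then (\<Sum>r<k. x c i r t) else 0)"
      proof (intro sum.cong refl)
        fix s assume "s \<in> {..<k}"
        show "(\<Sum>r<k. x c s r t) = (if s = i then (\<Sum>r<k. x c i r t) else 0)"
        proof (cases "s = i")
          case False
          have "x c s r t = 0" for r
          proof (rule ccontr)
            assume "x c s r t \<noteq> 0"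
            then have pos: "x c s r t > 0" by simp
            have "s = c div k" using xpos[OF pos] by simp
            also have "\<dots> = i" using same[OF pos p0] unfolding i_def by simp
            finally show False using False by simp
          qed
          then show ?thesis using False by simp
        qed simp
      qed
      also have "\<dots> = (\<Sum>r<k. x c i r t)" using ik by simp
      finally show ?thesis .
    qed
    have "g t = (\<Sum>c<k*k. \<Sum>r<k. x c i r t)" unfolding g_def using inner by simp
    also have "\<dots> \<le> 1" using snd1 ik by simp
    finally show ?thesis .
  qed
  have "(\<Sum>t<H. g t) = (\<Sum>c<k*k. \<Sum>t<H. \<Sum>s<k. \<Sum>r<k. x c s r t)"
    unfolding g_def by (rule sum.swap)
  also have "\<dots> = (\<Sum>c<k*k. \<Sum>s<k. \<Sum>r<k. \<Sum>t<H. x c s r t)"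
  proof (rule sum.cong[OF refl])
    fix c
    have "(\<Sum>t<H. \<Sum>s<k. \<Sum>r<k. x c s r t) = (\<Sum>s<k. \<Sum>t<H. \<Sum>r<k. x c s r t)"
      by (rule sum.swap)
    also have "\<dots> = (\<Sum>s<k. \<Sum>r<k. \<Sum>t<H. x c s r t)"
      by (intro sum.cong refl sum.swap)
    finally show "(\<Sum>t<H. \<Sum>s<k. \<Sum>r<k. x c s r t) = (\<Sum>s<k. \<Sum>r<k. \<Sum>t<H. x c s r t)" .
  qed
  also have "\<dots> = (\<Sum>c<k*k. \<Sum>s<k. \<Sum>r<k. Dk k c s r)"
    using Hs by (intro sum.cong refl) auto
  also have "\<dots> = (\<Sum>c<k*k. 1)"
  proof (intro sum.cong refl)
    fix c assume "c \<in> {..<k*k}"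
    then have "c div k < k" by (simp add: less_mult_imp_div_less)
    then show "(\<Sum>s<k. \<Sum>r<k. Dk k c s r) = 1" using \<open>c \<in> {..<k*k}\<close>
      by (simp add: Dk_def double_delta)
  qed
  finally have tot: "(\<Sum>t<H. g t) = k*k" by simp
  let ?A = "{t\<in>{..<H}. g t > 0}"
  have "(\<Sum>t<H. g t) = (\<Sum>t\<in>?A. g t)"
    by (rule sum.mono_neutral_right) auto
  also have "\<dots> \<le> (\<Sum>t\<in>?A. 1)" using gle by (intro sum_mono) auto
  also have "\<dots> = card ?A" by simp
  finally have c1: "k*k \<le> card ?A" using tot by simp
  let ?S = "{Suc t | t. \<exists>c s r. x c s r t > 0} \<union> {0}"
  have tH: "t < H" if "x c s r t > 0" for c s r t
  proof (rule ccontr)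
    assume "\<not> t < H"
    then have "x c s r t = 0" using H0 by simp
    with that show False by simp
  qed
  have "?S \<subseteq> Suc ` {..<H} \<union> {0}"
    by (auto dest: tH)
  then have finS: "finite ?S" by (rule finite_subset) simp
  have "?A \<subseteq> {..<makespan x}"
  proof
    fix t assume "t \<in> ?A"
    then have "g t > 0" by simp
    then obtain c s r where "x c s r t > 0" unfolding g_def
      by (metis (no_types, lifting) gr0I sum.neutral)
    then have "Suc t \<in> ?S" by blast
    then have "Suc t \<le> Max ?S" using finS by (rule Max_ge[rotated])
    then show "t \<in> {..<makespan x}" unfolding makespan_def by simp
  qed
  then have "card ?A \<le> makespan x" by (metis card_lessThan card_mono finite_lessThan)
  then show ?thesis using c1 by simp
qed

theorem lemma2:
  shows "\<exists>\<kappa>::real. \<kappa> > 0 \<and>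
    (\<forall>N::nat. \<exists>m mu E D. mu \<ge> N \<and> valid_instance m mu E D \<and>
       (\<forall>x. feasible m mu E D x \<longrightarrow>
          real (makespan x) \<ge> \<kappa> * sqrt (real mu) * real (Delta m mu D + T_len m mu E D)))"
proof (intro exI[of _ "1/2"] conjI allI)
  show "(0::real) < 1/2" by simp
next
  fix N :: nat
  define k where "k = Suc N"
  have k: "k > 0" unfolding k_def by simp
  have N: "N \<le> k*k" unfolding k_def by simp
  show "\<exists>m mu E D. mu \<ge> N \<and> valid_instance m mu E D \<and>
       (\<forall>x. feasible m mu E D x \<longrightarrow>
          real (makespan x) \<ge> 1/2 * sqrt (real mu) * real (Delta m mu D + T_len m mu E D))"
  proof (intro exI conjI allI impI)
    show "N \<le> k*k" by (rule N)
    show "valid_instance k (k*k) (Ek k) (Dk k)" using k by (rule valid)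
    fix x assume fe: "feasible k (k*k) (Ek k) (Dk k) x"
    have m: "k*k \<le> makespan x" using mk_lower[OF k fe] .
    have s: "sqrt (real (k*k)) = real k" by (simp add: real_sqrt_mult)
    have b: "Delta k (k*k) (Dk k) + T_len k (k*k) (Ek k) (Dk k) \<le> 2*k"
      using Delta_le[OF k] T_le[of k] by simp
    have "1/2 * sqrt (real (k*k)) * real (Delta k (k*k) (Dk k) + T_len k (k*k) (Ek k) (Dk k))
        \<le> 1/2 * real k * real (2*k)"
      unfolding s using b by (intro mult_left_mono) auto
    also have "\<dots> = real (k*k)" by simp
    also have "\<dots> \<le> real (makespan x)" using m by (simp only: of_nat_le_iff)
    finally show "1/2 * sqrt (real (k*k)) * real (Delta k (k*k) (Dk k) + T_len k (k*k) (Ek k) (Dk k))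
        \<le> real (makespan x)" .
  qed
qed

end
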